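(* For strategies with finite input sets $A,B$ and finite output sets $X,Y$, the class $\mathbb{NOSIG}:=\mathbf{R}\text{-}\mathbb{SIG}\cap\mathbf{L}\text{-}\mathbb{SIG}$ coincides exactly with the set of no-signalling strategies, i.e. those $P(x,y\mid a,b)$ such that $\sum_{y}P(x,y\mid a,b)$ does not depend on $b$ (for every $a,x$) and $\sum_{x}P(x,y\mid a,b)$ does not depend on $a$ (for every $b,y$).
   Context: A (two-party, single-round) strategy with input sets $A,B$ and output sets $X,Y$ is a family of conditional distributions $P(x,y\mid a,b)$. Distance: $|U,U'|=\sum_{a,b,x,y}|P_U(x,y\mid a,b)-P_{U'}(x,y\mid a,b)|$, and for a set $\mathcal U'$ of strategies $|U,\mathcal U'|=\inf_{U'\in\mathcal U'}|U,U'|$. For a strategy $U$ with input sets $A_U,B_U$ and output sets $X_U,Y_U$, $\mathrm{LOC}^n(U)$ is the set of strategies Alice and Bob can realize as follows: pick a finite set $R$ and a uniformly random $r\in R$ shared by both; Alice uses functions $f_A^j:A\times X_U^{j}\times R\to A_U$ ($0\le j<n$) to choose her input to the $(j+1)$-th call of $U$ from her input and previous outputs, and $f_A^n:A\times X_U^n\times R\to X$ to produce her output; Bob likewise with $g_B^j:B\times Y_U^j\times R\to B_U$ and $g_B^n:B\times Y_U^n\times R\to Y$; each of the (up to $n$) calls of $U$ is an independent use of $U$. $U'\le_{LOC}U$ iff $\lim_{n\to\infty}|U',\mathrm{LOC}^n(U)|=0$. The $\mathbf{R}\text{-}\mathbf{SIG}$ box: on inputs $a\in A$ (Alice), $b$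 (Bob), outputs $a$ to Alice and $a$ to Bob. The $\mathbf{L}\text{-}\mathbf{SIG}$ box: on inputs $a$, $b\in B$, outputs $b$ to Alice and $b$ to Bob. $\mathbf{R}\text{-}\mathbb{SIG}=\{U:U\le_{LOC}\mathbf{R}\text{-}\mathbf{SIG}\}$, $\mathbf{L}\text{-}\mathbb{SIG}=\{U:U\le_{LOC}\mathbf{L}\text{-}\mathbf{SIG}\}$. *)

theory Defs
  imports Complex_Main
begin

text \<open>A (two-party, single-round) strategy with input sets 'a, 'b and output sets 'x, 'y
  (finite types): P a b x y = P(x,y | a,b).\<close>
type_synonym ('a,'b,'x,'y) strat = "'a \<Rightarrow> 'b \<Rightarrow> 'x \<Rightarrow> 'y \<Rightarrow> real"

definition is_strategy :: "('a::finite,'b::finite,'x::finite,'y::finite) strat \<Rightarrow> bool" where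
  "is_strategy P \<longleftrightarrow> (\<forall>a b x y. 0 \<le> P a b x y) \<and> (\<forall>a b. (\<Sum>x\<in>UNIV. \<Sum>y\<in>UNIV. P a b x y) = 1)"

definition strat_dist :: "('a::finite,'b::finite,'x::finite,'y::finite) strat \<Rightarrow> ('a,'b,'x,'y) strat \<Rightarrow> real" where
  "strat_dist U U' = (\<Sum>a\<in>UNIV. \<Sum>b\<in>UNIV. \<Sum>x\<in>UNIV. \<Sum>y\<in>UNIV. \<bar>U a b x y - U' a b x y\<bar>)"

definition strat_setdist :: "('a::finite,'b::finite,'x::finite,'y::finite) strat \<Rightarrow> ('a,'b,'x,'y) strat set \<Rightarrow> real" where
  "strat_setdist U S = (INF U'\<in>S. strat_dist U U')"

text \<open>The strategy realised with n sequential independent calls of the box U, shared uniform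
  randomness r \<in> R (R a finite nonempty set), Alice's input functions fA j (history = list of her
  previous j box outputs), her output function fO, and Bob's gB j, gO likewise.\<close>
definition realize ::
  "nat \<Rightarrow> ('au::finite,'bu::finite,'xu::finite,'yu::finite) strat \<Rightarrow> nat set
   \<Rightarrow> (nat \<Rightarrow> 'a \<Rightarrow> 'xu list \<Rightarrow> nat \<Rightarrow> 'au) \<Rightarrow> ('a \<Rightarrow> 'xu list \<Rightarrow> nat \<Rightarrow> 'x)
   \<Rightarrow> (nat \<Rightarrow> 'b \<Rightarrow> 'yu list \<Rightarrow> nat \<Rightarrow> 'bu) \<Rightarrow> ('b \<Rightarrow> 'yu list \<Rightarrow> nat \<Rightarrow> 'y)
   \<Rightarrow> ('a,'b,'x,'y) strat" where
  "realize n U R fA fO gB gO = (\<lambda>a b x y.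
     (1 / real (card R)) * (\<Sum>r\<in>R. \<Sum>xs\<in>{xs. length xs = n}. \<Sum>ys\<in>{ys. length ys = n}.
        (if fO a xs r = x \<and> gO b ys r = y then
           (\<Prod>j<n. U (fA j a (take j xs) r) (gB j b (take j ys) r) (xs ! j) (ys ! j))
         else 0)))"

definition LOC :: "nat \<Rightarrow> ('au::finite,'bu::finite,'xu::finite,'yu::finite) strat
                   \<Rightarrow> ('a,'b,'x,'y) strat set" where
  "LOC n U = {realize n U R fA fO gB gO | R fA fO gB gO. finite R \<and> R \<noteq> {}}"

definition le_LOC :: "('a::finite,'b::finite,'x::finite,'y::finite) strat
                      \<Rightarrow> ('au::finite,'bu::finite,'xu::finite,'yu::finite) strat \<Rightarrow> bool" where
  "le_LOC U' U \<longleftrightarrow> (\<lambda>n. strat_setdist U' (LOC n U)) \<longlonglongrightarrow> 0"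

definition R_SIG_box :: "('a,'b,'a,'a) strat" where
  "R_SIG_box = (\<lambda>a b x y. if x = a \<and> y = a then 1 else 0)"

definition L_SIG_box :: "('a,'b,'b,'b) strat" where
  "L_SIG_box = (\<lambda>a b x y. if x = b \<and> y = b then 1 else 0)"

definition R_SIG_class :: "('a::finite,'b::finite,'x::finite,'y::finite) strat set" where
  "R_SIG_class = {U. is_strategy U \<and> le_LOC U (R_SIG_box :: ('a,'b,'a,'a) strat)}"

definition L_SIG_class :: "('a::finite,'b::finite,'x::finite,'y::finite) strat set" where
  "L_SIG_class = {U. is_strategy U \<and> le_LOC U (L_SIG_box :: ('a,'b,'b,'b) strat)}"

definition no_signalling :: "('a::finite,'b::finite,'x::finite,'y::finite) strat set" where
  "no_signalling = {P. is_strategy P \<and>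
     (\<forall>a x b b'. (\<Sum>y\<in>UNIV. P a b x y) = (\<Sum>y\<in>UNIV. P a b' x y)) \<and>
     (\<forall>b y a a'. (\<Sum>x\<in>UNIV. P a b x y) = (\<Sum>x\<in>UNIV. P a' b x y))}"

end

theory Submission imports Defs "HOL-Library.Nat_Bijection" begin

lemma card_as_sum: "finite A \<Longrightarrow> real (card {r\<in>A. P r}) = (\<Sum>r\<in>A. if P r then 1 else 0)"
  by (simp add: sum.inter_filter[symmetric])

lemma counts_exist:
  fixes k :: "'w \<Rightarrow> nat"
  assumes "finite W"
  shows "\<exists>f::nat\<Rightarrow>'w. (\<forall>r<sum k W. f r \<in> W) \<and> (\<forall>w\<in>W. card {r. r < sum k W \<and> f r = w} = k w)"
  using assms
proof (induction W rule: finite_induct)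
  case empty then show ?case by simp
next
  case (insert w W)
  then obtain f where f1: "\<forall>r<sum k W. f r \<in> W" and f2: "\<forall>v\<in>W. card {r. r < sum k W \<and> f r = v} = k v" by blast
  define M where "M = sum k W"
  define g where "g r = (if r < M then f r else w)" for r
  have s: "sum k (insert w W) = M + k w" using insert M_def by simp
  have "\<forall>r<sum k (insert w W). g r \<in> insert w W" using f1 unfolding s g_def M_def by auto
  moreover have "\<forall>v\<in>insert w W. card {r. r < sum k (insert w W) \<and> g r = v} = k v"
  proof
    fix v assume v: "v \<in> insert w W"
    show "card {r. r < sum k (insert w W) \<and> g r = v} = k v"
    proof (cases "v = w")
      case True
      have "{r. r < sum k (insert w W) \<and> g r = v} = {M..<M + k w}"
        unfolding True s g_def M_def using f1 insert(2) by (auto split: if_splits) (metis not_less)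
      then show ?thesis using True by simp
    next
      case False
      then have vW: "v \<in> W" using v by simp
      have "{r. r < sum k (insert w W) \<and> g r = v} = {r. r < M \<and> f r = v}"
        using False unfolding s g_def by auto
      then show ?thesis using f2 vW M_def by simp
    qed
  qed
  ultimately show ?case by blast
qed

lemma approx_dist:
  fixes p :: "'w::finite \<Rightarrow> real"
  assumes p0: "\<forall>w. 0 \<le> p w" and p1: "sum p UNIV = 1" and N: "N > 0"
  shows "\<exists>f::nat\<Rightarrow>'w. (\<Sum>w\<in>UNIV. \<bar>p w - real (card {r. r < N \<and> f r = w}) / real N\<bar>) \<le> 2 * real (card (UNIV :: 'w set)) / real N"
proof -
  define w0 :: 'w where "w0 = undefined"
  define k0 where "k0 w = nat \<lfloor>real N * p w\<rfloor>" for w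
  have k0eq: "real (k0 w) = real_of_int \<lfloor>real N * p w\<rfloor>" for w
    using p0 unfolding k0_def by simp
  have k0a: "real (k0 w) \<le> real N * p w" for w
    unfolding k0eq by simp
  have k0b: "real N * p w - 1 < real (k0 w)" for w
    unfolding k0eq by linarith
  define S where "S = (\<Sum>w\<in>UNIV-{w0}. k0 w)"
  have "real S = (\<Sum>w\<in>UNIV-{w0}. real (k0 w))" unfolding S_def by simp
  also have "\<dots> \<le> (\<Sum>w\<in>UNIV-{w0}. real N * p w)" by (rule sum_mono) (rule k0a)
  also have "\<dots> \<le> (\<Sum>w\<in>UNIV. real N * p w)" by (rule sum_mono2) (use p0 in auto)
  also have "\<dots> = real N" using p1 by (simp add: sum_distrib_left[symmetric])
  finally have SN: "S \<le> N" by simp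
  define k where "k w = (if w = w0 then N - S else k0 w)" for w
  have sk: "sum k UNIV = N"
  proof -
    have "sum k UNIV = k w0 + sum k (UNIV - {w0})" by (simp add: sum.remove)
    also have "sum k (UNIV - {w0}) = S" unfolding S_def k_def by (rule sum.cong) auto
    finally show ?thesis using SN unfolding k_def by simp
  qed
  obtain f :: "nat \<Rightarrow> 'w" where f: "\<forall>w. card {r. r < N \<and> f r = w} = k w"
    using counts_exist[of UNIV k] sk by auto
  define d where "d w = p w - real (k w) / real N" for w
  have skr: "(\<Sum>w\<in>UNIV. real (k w)) = real N" using sk by (metis of_nat_sum)
  have sd: "sum d UNIV = 0"
    using p1 skr N unfolding d_def by (simp add: sum_subtractf sum_divide_distrib[symmetric])
  have d1: "\<bar>d w\<bar> \<le> 1 / real N" if "w \<noteq> w0" for w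
  proof -
    have "d w = p w - real (k0 w) / real N" using that unfolding d_def k_def by simp
    moreover have "real (k0 w) / real N \<le> p w" using k0a[of w] N by (simp add: field_simps)
    moreover have "(real N * p w - 1) / real N < real (k0 w) / real N"
      by (rule divide_strict_right_mono) (use k0b N in auto)
    moreover have "(real N * p w - 1) / real N = p w - 1 / real N" using N by (simp add: diff_divide_distrib)
    ultimately show ?thesis by simp
  qed
  have sum_rest: "(\<Sum>w\<in>UNIV-{w0}. \<bar>d w\<bar>) \<le> real (card (UNIV :: 'w set)) / real N"
  proof -
    have "(\<Sum>w\<in>UNIV-{w0}. \<bar>d w\<bar>) \<le> (\<Sum>w\<in>UNIV-{w0}. 1 / real N)" by (rule sum_mono) (simp add: d1)
    also have "\<dots> = real (card (UNIV - {w0 :: 'w})) / real N" by simp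
    also have "\<dots> \<le> real (card (UNIV :: 'w set)) / real N"
      by (rule divide_right_mono) (auto intro: card_mono)
    finally show ?thesis .
  qed
  have "sum d UNIV = d w0 + (\<Sum>w\<in>UNIV-{w0}. d w)" by (simp add: sum.remove)
  then have "\<bar>d w0\<bar> = \<bar>\<Sum>w\<in>UNIV-{w0}. d w\<bar>" using sd by simp
  also have "\<dots> \<le> (\<Sum>w\<in>UNIV-{w0}. \<bar>d w\<bar>)" by (rule sum_abs)
  finally have dw0: "\<bar>d w0\<bar> \<le> real (card (UNIV :: 'w set)) / real N" using sum_rest by simp
  have "(\<Sum>w\<in>UNIV. \<bar>d w\<bar>) = \<bar>d w0\<bar> + (\<Sum>w\<in>UNIV-{w0}. \<bar>d w\<bar>)" by (simp add: sum.remove)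
  also have "\<dots> \<le> 2 * real (card (UNIV :: 'w set)) / real N" using dw0 sum_rest by simp
  finally show ?thesis using f unfolding d_def by (intro exI[of _ f]) simp
qed

definition tr :: "('a,'b,'x,'y) strat \<Rightarrow> ('b,'a,'y,'x) strat" where
  "tr P = (\<lambda>b a y x. P a b x y)"

lemma tr_tr[simp]: "tr (tr P) = P" by (simp add: tr_def)

lemma realize_tr:
  "realize n (tr U) R fA fO gB gO = tr (realize n U R gB gO fA fO)"
proof (intro ext)
  fix a b x y
  have "(\<Sum>xs\<in>{xs. length xs = n}. \<Sum>ys\<in>{ys. length ys = n}.
          (if fO a xs r = x \<and> gO b ys r = y then
             (\<Prod>j<n. U (gB j b (take j ys) r) (fA j a (take j xs) r) (ys ! j) (xs ! j)) else 0))
      = (\<Sum>ys\<in>{ys. length ys = n}. \<Sum>xs\<in>{xs. length xs = n}.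
          (if gO b ys r = y \<and> fO a xs r = x then
             (\<Prod>j<n. U (gB j b (take j ys) r) (fA j a (take j xs) r) (ys ! j) (xs ! j)) else 0))" for r
    by (subst sum.swap) (simp add: conj_commute)
  then show "realize n (tr U) R fA fO gB gO a b x y = tr (realize n U R gB gO fA fO) a b x y"
    unfolding realize_def tr_def by simp
qed

lemma LOC_tr: "LOC n (tr U) = tr ` LOC n U"
proof
  show "LOC n (tr U) \<subseteq> tr ` LOC n U"
  proof
    fix V assume "V \<in> LOC n (tr U)"
    then obtain R fA fO gB gO where V: "V = realize n (tr U) R fA fO gB gO" and R: "finite R" "R \<noteq> {}"
      unfolding LOC_def by blast
    have "realize n U R gB gO fA fO \<in> LOC n U" using R unfolding LOC_def by blast
    then show "V \<in> tr ` LOC n U" unfolding V realize_tr by blast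
  qed
next
  show "tr ` LOC n U \<subseteq> LOC n (tr U)"
  proof
    fix V assume "V \<in> tr ` LOC n U"
    then obtain R fA fO gB gO where V: "V = tr (realize n U R fA fO gB gO)" and R: "finite R" "R \<noteq> {}"
      unfolding LOC_def by blast
    have "realize n (tr U) R gB gO fA fO \<in> LOC n (tr U)" using R unfolding LOC_def by blast
    then show "V \<in> LOC n (tr U)" unfolding V realize_tr by simp
  qed
qed

lemma dist_tr: "strat_dist (tr U) (tr V) = strat_dist U V"
proof -
  have "(\<Sum>x\<in>UNIV. \<Sum>y\<in>UNIV. f x y) = (\<Sum>y\<in>UNIV. \<Sum>x\<in>UNIV. f x y)" for f :: "'z \<Rightarrow> 'u \<Rightarrow> real"
    by (rule sum.swap)
  have "strat_dist (tr U) (tr V) = (\<Sum>b\<in>UNIV. \<Sum>a\<in>UNIV. \<Sum>y\<in>UNIV. \<Sum>x\<in>UNIV. \<bar>U a b x y - V a b x y\<bar>)"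
    unfolding strat_dist_def tr_def ..
  also have "\<dots> = (\<Sum>a\<in>UNIV. \<Sum>b\<in>UNIV. \<Sum>y\<in>UNIV. \<Sum>x\<in>UNIV. \<bar>U a b x y - V a b x y\<bar>)"
    by (rule sum.swap)
  also have "\<dots> = (\<Sum>a\<in>UNIV. \<Sum>b\<in>UNIV. \<Sum>x\<in>UNIV. \<Sum>y\<in>UNIV. \<bar>U a b x y - V a b x y\<bar>)"
    by (intro sum.cong refl sum.swap)
  finally show ?thesis unfolding strat_dist_def .
qed

lemma setdist_tr: "strat_setdist (tr U) (LOC n (tr V)) = strat_setdist U (LOC n V)"
  unfolding strat_setdist_def LOC_tr by (simp add: image_comp comp_def dist_tr)

lemma le_LOC_tr: "le_LOC (tr U') (tr U) \<longleftrightarrow> le_LOC U' U"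
  unfolding le_LOC_def setdist_tr ..

lemma is_strategy_tr: "is_strategy (tr P) \<longleftrightarrow> is_strategy P"
proof -
  have sw: "(\<Sum>x\<in>UNIV. \<Sum>y\<in>UNIV. P a b y x) = (\<Sum>y\<in>UNIV. \<Sum>x\<in>UNIV. P a b y x)" for a b
    by (rule sum.swap)
  show ?thesis unfolding is_strategy_def tr_def
  proof (intro iffI conjI allI; (elim conjE)?)
    fix a b assume "\<forall>b a. (\<Sum>x\<in>UNIV. \<Sum>y\<in>UNIV. P a b y x) = 1"
    then show "(\<Sum>x\<in>UNIV. \<Sum>y\<in>UNIV. P a b x y) = 1" using sw[of a b] by simp
  next
    fix a b assume "\<forall>a b. (\<Sum>x\<in>UNIV. \<Sum>y\<in>UNIV. P a b x y) = 1"
    then show "(\<Sum>x\<in>UNIV. \<Sum>y\<in>UNIV. P b a y x) = 1" using sw[of b a] by simp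
  qed auto
qed

lemma box_tr: "tr (L_SIG_box :: ('a,'b,'b,'b) strat) = R_SIG_box"
  unfolding tr_def L_SIG_box_def R_SIG_box_def by (intro ext) auto

lemma sum_swap3:
  "(\<Sum>y\<in>Y. \<Sum>r\<in>R. \<Sum>xs\<in>X. \<Sum>ys\<in>Z. f y r xs ys) = (\<Sum>r\<in>R. \<Sum>xs\<in>X. \<Sum>ys\<in>Z. \<Sum>y\<in>Y. f y r xs ys)"
proof -
  have "(\<Sum>y\<in>Y. \<Sum>r\<in>R. \<Sum>xs\<in>X. \<Sum>ys\<in>Z. f y r xs ys) = (\<Sum>r\<in>R. \<Sum>y\<in>Y. \<Sum>xs\<in>X. \<Sum>ys\<in>Z. f y r xs ys)"
    by (rule sum.swap)
  also have "\<dots> = (\<Sum>r\<in>R. \<Sum>xs\<in>X. \<Sum>y\<in>Y. \<Sum>ys\<in>Z. f y r xs ys)"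
    by (intro sum.cong refl sum.swap)
  also have "\<dots> = (\<Sum>r\<in>R. \<Sum>xs\<in>X. \<Sum>ys\<in>Z. \<Sum>y\<in>Y. f y r xs ys)"
    by (intro sum.cong refl sum.swap)
  finally show ?thesis .
qed

lemma sum_if_eq: "(\<Sum>y\<in>(UNIV::'y::finite set). if A \<and> g = y then c else 0) = (if A then c else (0::real))"
  by (cases A) auto

lemma realize_margA:
  assumes indep: "\<forall>a b b' x y. U a b x y = U a b' x y"
  shows "(\<Sum>y\<in>(UNIV::'y::finite set). realize n U R fA fO gB gO a b x y) = (\<Sum>y\<in>UNIV. realize n U R fA fO gB gO a b' x y)"
proof -
  have key: "(\<Sum>y\<in>(UNIV::'y set). realize n U R fA fO gB gO a b x y) = 1 / real (card R) * (\<Sum>r\<in>R. \<Sum>xs\<in>{xs. length xs = n}. \<Sum>ys\<in>{ys. length ys = n}.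
      (if fO a xs r = x then (\<Prod>j<n. U (fA j a (take j xs) r) (gB j b (take j ys) r) (xs ! j) (ys ! j)) else 0))" for b
    unfolding realize_def
    apply (simp only: sum_distrib_left[symmetric])
    apply (subst sum_swap3)
    apply (rule arg_cong[where f="\<lambda>t. 1 / real (card R) * t"])
    apply (intro sum.cong refl)
    apply (rule sum_if_eq)
    done
  have pr: "(\<Prod>j<n. U (fA j a (take j xs) r) (gB j b (take j ys) r) (xs ! j) (ys ! j))
      = (\<Prod>j<n. U (fA j a (take j xs) r) (gB j b' (take j ys) r) (xs ! j) (ys ! j))" for xs ys r
    using indep by (intro prod.cong refl) blast
  show ?thesis unfolding key pr ..
qed

lemma R_box_indep: "\<forall>a b b' x y. (R_SIG_box :: ('a,'b,'a,'a) strat) a b x y = R_SIG_box a b' x y"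
  unfolding R_SIG_box_def by simp

lemma LOC_nonempty: "LOC n U \<noteq> {}"
  unfolding LOC_def by blast

lemma dist_nonneg: "0 \<le> strat_dist U V"
  unfolding strat_dist_def by (intro sum_nonneg) auto

lemma setdist_le: "V \<in> LOC n U \<Longrightarrow> strat_setdist U' (LOC n U) \<le> strat_dist U' V"
  unfolding strat_setdist_def
  by (rule cINF_lower) (auto intro!: bdd_belowI[of _ 0] dist_nonneg)

lemma setdist_nonneg: "0 \<le> strat_setdist U' (LOC n U)"
  unfolding strat_setdist_def
  by (rule cINF_greatest) (auto simp: LOC_nonempty dist_nonneg)

lemma local_bound: "(\<Sum>y\<in>UNIV. \<bar>U a b x y - V a b x y\<bar>) \<le> strat_dist U V"
proof -
  have "(\<Sum>y\<in>UNIV. \<bar>U a b x y - V a b x y\<bar>) \<le> (\<Sum>x\<in>UNIV. \<Sum>y\<in>UNIV. \<bar>U a b x y - V a b x y\<bar>)"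
    by (rule member_le_sum) (auto intro: sum_nonneg)
  also have "\<dots> \<le> (\<Sum>b\<in>UNIV. \<Sum>x\<in>UNIV. \<Sum>y\<in>UNIV. \<bar>U a b x y - V a b x y\<bar>)"
    by (rule member_le_sum[where f="\<lambda>b. \<Sum>x\<in>UNIV. \<Sum>y\<in>UNIV. \<bar>U a b x y - V a b x y\<bar>"]) (auto intro: sum_nonneg)
  also have "\<dots> \<le> strat_dist U V" unfolding strat_dist_def
    by (rule member_le_sum[where f="\<lambda>a. \<Sum>b\<in>UNIV. \<Sum>x\<in>UNIV. \<Sum>y\<in>UNIV. \<bar>U a b x y - V a b x y\<bar>"]) (auto intro: sum_nonneg)
  finally show ?thesis .
qed

lemma margA_closed:
  fixes U' :: "('a::finite,'b::finite,'x::finite,'y::finite) strat"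
    and U :: "('au::finite,'bu::finite,'xu::finite,'yu::finite) strat"
  assumes le: "le_LOC U' U"
    and H: "\<forall>n. \<forall>V\<in>(LOC n U :: ('a,'b,'x,'y) strat set). (\<Sum>y\<in>UNIV. V a b x y) = (\<Sum>y\<in>UNIV. V a b' x y)"
  shows "(\<Sum>y\<in>UNIV. U' a b x y) = (\<Sum>y\<in>UNIV. U' a b' x y)"
proof -
  define D where "D = \<bar>(\<Sum>y\<in>UNIV. U' a b x y) - (\<Sum>y\<in>UNIV. U' a b' x y)\<bar>"
  have "D / 2 \<le> strat_setdist U' (LOC n U)" for n
    unfolding strat_setdist_def
  proof (rule cINF_greatest)
    show "LOC n U \<noteq> {}" by (rule LOC_nonempty)
  next
    fix V :: "('a,'b,'x,'y) strat" assume V: "V \<in> LOC n U"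
    have "D = \<bar>(\<Sum>y\<in>UNIV. U' a b x y - V a b x y) - (\<Sum>y\<in>UNIV. U' a b' x y - V a b' x y)\<bar>"
      using H V unfolding D_def by (simp add: sum_subtractf)
    also have "\<dots> \<le> \<bar>\<Sum>y\<in>UNIV. U' a b x y - V a b x y\<bar> + \<bar>\<Sum>y\<in>UNIV. U' a b' x y - V a b' x y\<bar>"
      by (rule abs_triangle_ineq4)
    also have "\<dots> \<le> (\<Sum>y\<in>UNIV. \<bar>U' a b x y - V a b x y\<bar>) + (\<Sum>y\<in>UNIV. \<bar>U' a b' x y - V a b' x y\<bar>)"
      by (intro add_mono sum_abs)
    also have "\<dots> \<le> strat_dist U' V + strat_dist U' V"
      by (intro add_mono local_bound)
    finally show "D / 2 \<le> strat_dist U' V" by simp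
  qed
  then have "D / 2 \<le> 0"
    using le unfolding le_LOC_def by (intro LIMSEQ_le_const) auto
  then show ?thesis unfolding D_def by simp
qed

lemma prod_ind:
  assumes "length xs = n" "length ys = n"
  shows "(\<Prod>j<n. if xs!j = a \<and> ys!j = a then 1 else (0::real)) = (if xs = replicate n a \<and> ys = replicate n a then 1 else 0)"
proof (cases "xs = replicate n a \<and> ys = replicate n a")
  case True
  then show ?thesis by simp
next
  case False
  then obtain j where "j < n" "\<not> (xs!j = a \<and> ys!j = a)"
    using assms by (auto simp: list_eq_iff_nth_eq)
  then show ?thesis using False by (intro trans[OF prod_zero]) auto
qed

lemma finite_len: "finite {xs :: 'a::finite list. length xs = n}"
  using finite_lists_length_eq[of "UNIV :: 'a set" n] by simp

lemma realize_R_box: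
  "realize n (R_SIG_box :: ('a::finite,'b::finite,'a,'a) strat) R (\<lambda>j a h r. a) fO (\<lambda>j b h r. b) gO a b x y
   = 1 / real (card R) * (\<Sum>r\<in>R. if fO a (replicate n a) r = x \<and> gO b (replicate n a) r = y then 1 else 0)"
proof -
  have "(\<Sum>xs\<in>{xs. length xs = n}. \<Sum>ys\<in>{ys. length ys = n}.
          (if fO a xs r = x \<and> gO b ys r = y then
             (\<Prod>j<n. (R_SIG_box :: ('a,'b,'a,'a) strat) a b (xs ! j) (ys ! j)) else 0))
      = (if fO a (replicate n a) r = x \<and> gO b (replicate n a) r = y then 1 else 0)" for r
  proof -
    have "(\<Sum>xs\<in>{xs. length xs = n}. \<Sum>ys\<in>{ys. length ys = n}.
          (if fO a xs r = x \<and> gO b ys r = y then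
             (\<Prod>j<n. (R_SIG_box :: ('a,'b,'a,'a) strat) a b (xs ! j) (ys ! j)) else 0))
      = (\<Sum>xs\<in>{xs. length xs = n}. \<Sum>ys\<in>{ys. length ys = n}.
          (if xs = replicate n a then (if ys = replicate n a then (if fO a xs r = x \<and> gO b ys r = y then 1 else 0) else 0) else 0))"
    proof (intro sum.cong refl)
      fix xs ys :: "'a list" assume "xs \<in> {xs. length xs = n}" "ys \<in> {ys. length ys = n}"
      then have l: "length xs = n" "length ys = n" by auto
      have "(\<Prod>j<n. (R_SIG_box :: ('a,'b,'a,'a) strat) a b (xs ! j) (ys ! j)) = (if xs = replicate n a \<and> ys = replicate n a then 1 else 0)"
        by (simp only: R_SIG_box_def prod_ind[OF l])
      then show "(if fO a xs r = x \<and> gO b ys r = y then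
             (\<Prod>j<n. (R_SIG_box :: ('a,'b,'a,'a) strat) a b (xs ! j) (ys ! j)) else 0) =
          (if xs = replicate n a then (if ys = replicate n a then (if fO a xs r = x \<and> gO b ys r = y then 1 else 0) else 0) else 0)"
        by auto
    qed
    also have "\<dots> = (\<Sum>xs\<in>{xs. length xs = n}. 
          (if xs = replicate n a then (\<Sum>ys\<in>{ys. length ys = n}. (if ys = replicate n a then (if fO a xs r = x \<and> gO b ys r = y then 1 else 0) else 0)) else 0))"
      by (intro sum.cong refl) auto
    also have "\<dots> = (if fO a (replicate n a) r = x \<and> gO b (replicate n a) r = y then 1 else 0)"
      by (simp only: sum.delta finite_len) simp
    finally show ?thesis .
  qed
  then show ?thesis unfolding realize_def by simp
qed

lemma card_lt_sum: fixes N :: nat shows "real (card {r. r < N \<and> f r = w}) = (\<Sum>r<N. if f r = w then 1 else 0)"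
proof -
  have e: "{r. r < N \<and> f r = w} = {r\<in>{..<N}. f r = w}" by auto
  show ?thesis unfolding e by (rule card_as_sum) simp
qed

lemma card_lt_le: fixes N :: nat shows "real (card {r. r < N \<and> f r = w}) \<le> real N"
proof -
  have "card {r. r < N \<and> f r = w} \<le> card {..<N}" by (rule card_mono) auto
  then show ?thesis by simp
qed

lemma R_dir2:
  fixes P :: "('a::finite,'b::finite,'x::finite,'y::finite) strat"
  assumes st: "is_strategy P" and ns: "\<forall>a x b b'. (\<Sum>y\<in>UNIV. P a b x y) = (\<Sum>y\<in>UNIV. P a b' x y)"
  shows "le_LOC P (R_SIG_box :: ('a,'b,'a,'a) strat)"
proof -
  define PA where "PA a x = (\<Sum>y\<in>UNIV. P a undefined x y)" for a x
  have P0: "0 \<le> P a b x y" for a b x y using st unfolding is_strategy_def by simp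
  have PA0: "0 \<le> PA a x" for a x unfolding PA_def by (intro sum_nonneg) (simp add: P0)
  have PA1: "(\<Sum>x\<in>UNIV. PA a x) = 1" for a using st unfolding is_strategy_def PA_def by simp
  have PAb: "(\<Sum>y\<in>UNIV. P a b x y) = PA a x" for a b x using ns unfolding PA_def by metis
  define Q where "Q a b x y = (if PA a x = 0 then (if y = undefined then 1 else 0) else P a b x y / PA a x)" for a b x y
  have Q0: "0 \<le> Q a b x y" for a b x y unfolding Q_def using P0 PA0 by simp
  have Q1: "(\<Sum>y\<in>UNIV. Q a b x y) = 1" for a b x
  proof (cases "PA a x = 0")
    case True then show ?thesis unfolding Q_def by simp
  next
    case False then show ?thesis unfolding Q_def by (simp add: sum_divide_distrib[symmetric] PAb)
  qed
  have PQ: "P a b x y = PA a x * Q a b x y" for a b x y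
  proof (cases "PA a x = 0")
    case True
    then have "(\<Sum>y\<in>UNIV. P a b x y) = 0" using PAb by simp
    then have "P a b x y = 0" using P0 by (simp add: sum_nonneg_eq_0_iff)
    then show ?thesis using True by simp
  next
    case False then show ?thesis unfolding Q_def by simp
  qed
  define CA where "CA = real (card (UNIV :: 'a set))"
  define CB where "CB = real (card (UNIV :: 'b set))"
  define CX where "CX = real (card (UNIV :: 'x set))"
  define CY where "CY = real (card (UNIV :: 'y set))"
  define C where "C = CA * CB * (2 * CX + CX * (2 * CY))"
  have key: "strat_setdist P (LOC N (R_SIG_box :: ('a,'b,'a,'a) strat)) \<le> C / real N" if N: "N > 0" for N
  proof -
    define F where "F a = (SOME f::nat\<Rightarrow>'x. (\<Sum>x\<in>UNIV. \<bar>PA a x - real (card {r. r < N \<and> f r = x}) / real N\<bar>) \<le> 2 * CX / real N)" for a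
    have F: "(\<Sum>x\<in>UNIV. \<bar>PA a x - real (card {r. r < N \<and> F a r = x}) / real N\<bar>) \<le> 2 * CX / real N" for a
    proof -
      have "\<exists>f::nat\<Rightarrow>'x. (\<Sum>x\<in>UNIV. \<bar>PA a x - real (card {r. r < N \<and> f r = x}) / real N\<bar>) \<le> 2 * CX / real N"
        unfolding CX_def by (rule approx_dist) (use PA0 PA1 N in auto)
      then show ?thesis unfolding F_def by (rule someI_ex)
    qed
    define G where "G a b x = (SOME f::nat\<Rightarrow>'y. (\<Sum>y\<in>UNIV. \<bar>Q a b x y - real (card {r. r < N \<and> f r = y}) / real N\<bar>) \<le> 2 * CY / real N)" for a b x
    have G: "(\<Sum>y\<in>UNIV. \<bar>Q a b x y - real (card {r. r < N \<and> G a b x r = y}) / real N\<bar>) \<le> 2 * CY / real N" for a b x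
    proof -
      have "\<exists>f::nat\<Rightarrow>'y. (\<Sum>y\<in>UNIV. \<bar>Q a b x y - real (card {r. r < N \<and> f r = y}) / real N\<bar>) \<le> 2 * CY / real N"
        unfolding CY_def by (rule approx_dist) (use Q0 Q1 N in auto)
      then show ?thesis unfolding G_def by (rule someI_ex)
    qed
    define qA where "qA a x = real (card {r. r < N \<and> F a r = x}) / real N" for a x
    define qQ where "qQ a b x y = real (card {r. r < N \<and> G a b x r = y}) / real N" for a b x y
    have qA0: "0 \<le> qA a x" and qA1: "qA a x \<le> 1" for a x
      unfolding qA_def using card_lt_le[of N "F a" x] N by (auto simp: field_simps)
    define R where "R = prod_encode ` ({..<N} \<times> {..<N})"
    define fO where "fO a (xs::'a list) r = F a (fst (prod_decode r))" for a xs r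
    define gO where "gO b (ys::'a list) r = G (hd ys) b (F (hd ys) (fst (prod_decode r))) (snd (prod_decode r))" for b ys r
    define V where "V = (realize N (R_SIG_box :: ('a,'b,'a,'a) strat) R (\<lambda>j a h r. a) fO (\<lambda>j b h r. b) gO :: ('a,'b,'x,'y) strat)"
    have finR: "finite R" "R \<noteq> {}" unfolding R_def using N by auto
    have VLOC: "V \<in> LOC N (R_SIG_box :: ('a,'b,'a,'a) strat)" unfolding V_def LOC_def using finR by blast
    have cardR: "card R = N * N" unfolding R_def
      by (subst card_image) (auto intro: inj_prod_encode)
    have Veq: "V a b x y = qA a x * qQ a b x y" for a b x y
    proof -
      have "(\<Sum>r\<in>R. if fO a (replicate N a) r = x \<and> gO b (replicate N a) r = y then 1 else (0::real))
          = (\<Sum>t\<in>{..<N} \<times> {..<N}. if F a (fst t) = x \<and> G a b (F a (fst t)) (snd t) = y then 1 else 0)"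
        unfolding R_def fO_def gO_def using N
        by (subst sum.reindex) (auto intro: inj_prod_encode)
      also have "\<dots> = (\<Sum>i<N. \<Sum>j<N. if F a i = x \<and> G a b (F a i) j = y then 1 else 0)"
        unfolding sum.cartesian_product by (intro sum.cong refl) (auto simp: case_prod_beta)
      also have "\<dots> = (\<Sum>i<N. if F a i = x then (\<Sum>j<N. if G a b x j = y then 1 else 0) else 0)"
        by (intro sum.cong refl) auto
      also have "\<dots> = (\<Sum>i<N. if F a i = x then 1 else 0) * (\<Sum>j<N. if G a b x j = y then 1 else 0)"
        unfolding sum_distrib_right by (intro sum.cong refl) simp
      finally have "(\<Sum>r\<in>R. if fO a (replicate N a) r = x \<and> gO b (replicate N a) r = y then 1 else (0::real))
          = real (card {r. r < N \<and> F a r = x}) * real (card {r. r < N \<and> G a b x r = y})"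
        by (simp add: card_lt_sum)
      then show ?thesis unfolding V_def realize_R_box qA_def qQ_def cardR by simp
    qed
    have pt: "\<bar>P a b x y - V a b x y\<bar> \<le> \<bar>PA a x - qA a x\<bar> * Q a b x y + qA a x * \<bar>Q a b x y - qQ a b x y\<bar>" for a b x y
    proof -
      have "P a b x y - V a b x y = (PA a x - qA a x) * Q a b x y + qA a x * (Q a b x y - qQ a b x y)"
        unfolding PQ Veq by (simp add: algebra_simps)
      also have "\<bar>\<dots>\<bar> \<le> \<bar>(PA a x - qA a x) * Q a b x y\<bar> + \<bar>qA a x * (Q a b x y - qQ a b x y)\<bar>"
        by (rule abs_triangle_ineq)
      also have "\<dots> = \<bar>PA a x - qA a x\<bar> * Q a b x y + qA a x * \<bar>Q a b x y - qQ a b x y\<bar>"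
        using Q0 qA0 by (simp add: abs_mult)
      finally show ?thesis .
    qed
    have sy: "(\<Sum>y\<in>UNIV. \<bar>P a b x y - V a b x y\<bar>) \<le> \<bar>PA a x - qA a x\<bar> + 2 * CY / real N" for a b x
    proof -
      have "(\<Sum>y\<in>UNIV. \<bar>P a b x y - V a b x y\<bar>) \<le> (\<Sum>y\<in>UNIV. \<bar>PA a x - qA a x\<bar> * Q a b x y + qA a x * \<bar>Q a b x y - qQ a b x y\<bar>)"
        by (rule sum_mono) (rule pt)
      also have "\<dots> = \<bar>PA a x - qA a x\<bar> * (\<Sum>y\<in>UNIV. Q a b x y) + qA a x * (\<Sum>y\<in>UNIV. \<bar>Q a b x y - qQ a b x y\<bar>)"
        by (simp add: sum.distrib sum_distrib_left)
      also have "\<dots> \<le> \<bar>PA a x - qA a x\<bar> * 1 + 1 * (2 * CY / real N)"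
        unfolding Q1 using G[of a b x] qA0[of a x] qA1[of a x] unfolding qQ_def
        by (intro add_mono mult_mono) (auto intro: sum_nonneg)
      finally show ?thesis by simp
    qed
    have sx: "(\<Sum>x\<in>UNIV. \<Sum>y\<in>UNIV. \<bar>P a b x y - V a b x y\<bar>) \<le> 2 * CX / real N + CX * (2 * CY / real N)" for a b
    proof -
      have "(\<Sum>x\<in>UNIV. \<Sum>y\<in>UNIV. \<bar>P a b x y - V a b x y\<bar>) \<le> (\<Sum>x\<in>UNIV. \<bar>PA a x - qA a x\<bar> + 2 * CY / real N)"
        by (rule sum_mono) (rule sy)
      also have "\<dots> = (\<Sum>x\<in>UNIV. \<bar>PA a x - qA a x\<bar>) + CX * (2 * CY / real N)"
        unfolding CX_def by (simp add: sum.distrib)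
      also have "\<dots> \<le> 2 * CX / real N + CX * (2 * CY / real N)"
        using F[of a] unfolding qA_def by simp
      finally show ?thesis .
    qed
    have "strat_dist P V \<le> (\<Sum>a\<in>(UNIV::'a set). \<Sum>b\<in>(UNIV::'b set). 2 * CX / real N + CX * (2 * CY / real N))"
      unfolding strat_dist_def by (intro sum_mono sx)
    also have "\<dots> = C / real N" unfolding C_def CA_def CB_def using N by (simp add: field_simps)
    finally have "strat_dist P V \<le> C / real N" .
    then show ?thesis using setdist_le[OF VLOC, of P] by simp
  qed
  show ?thesis unfolding le_LOC_def
  proof (rule tendsto_sandwich[where f="\<lambda>n. 0" and h="\<lambda>n. C / real n"])
    show "\<forall>\<^sub>F n in sequentially. 0 \<le> strat_setdist P (LOC n (R_SIG_box :: ('a,'b,'a,'a) strat))"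
      by (simp add: setdist_nonneg)
    show "\<forall>\<^sub>F n in sequentially. strat_setdist P (LOC n (R_SIG_box :: ('a,'b,'a,'a) strat)) \<le> C / real n"
      using key by (intro eventually_sequentiallyI[of 1]) auto
    show "(\<lambda>n. 0) \<longlonglongrightarrow> (0::real)" by simp
    show "(\<lambda>n. C / real n) \<longlonglongrightarrow> 0" by (rule lim_const_over_n)
  qed
qed

lemma R_class_iff:
  fixes P :: "('a::finite,'b::finite,'x::finite,'y::finite) strat"
  shows "P \<in> R_SIG_class \<longleftrightarrow> is_strategy P \<and> (\<forall>a x b b'. (\<Sum>y\<in>UNIV. P a b x y) = (\<Sum>y\<in>UNIV. P a b' x y))"
proof
  assume P: "P \<in> R_SIG_class"
  then have st: "is_strategy P" and le: "le_LOC P (R_SIG_box :: ('a,'b,'a,'a) strat)"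
    unfolding R_SIG_class_def by auto
  have "(\<Sum>y\<in>UNIV. P a b x y) = (\<Sum>y\<in>UNIV. P a b' x y)" for a x b b'
  proof (rule margA_closed[OF le], intro allI ballI)
    fix n and V :: "('a,'b,'x,'y) strat" assume "V \<in> LOC n (R_SIG_box :: ('a,'b,'a,'a) strat)"
    then obtain R fA fO gB gO where "V = realize n (R_SIG_box :: ('a,'b,'a,'a) strat) R fA fO gB gO"
      unfolding LOC_def by blast
    then show "(\<Sum>y\<in>UNIV. V a b x y) = (\<Sum>y\<in>UNIV. V a b' x y)"
      using realize_margA[OF R_box_indep] by simp
  qed
  then show "is_strategy P \<and> (\<forall>a x b b'. (\<Sum>y\<in>UNIV. P a b x y) = (\<Sum>y\<in>UNIV. P a b' x y))"
    using st by blast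
next
  assume "is_strategy P \<and> (\<forall>a x b b'. (\<Sum>y\<in>UNIV. P a b x y) = (\<Sum>y\<in>UNIV. P a b' x y))"
  then show "P \<in> R_SIG_class" unfolding R_SIG_class_def using R_dir2 by blast
qed

lemma L_class_iff:
  fixes P :: "('a::finite,'b::finite,'x::finite,'y::finite) strat"
  shows "P \<in> L_SIG_class \<longleftrightarrow> is_strategy P \<and> (\<forall>b y a a'. (\<Sum>x\<in>UNIV. P a b x y) = (\<Sum>x\<in>UNIV. P a' b x y))"
proof -
  have "P \<in> L_SIG_class \<longleftrightarrow> is_strategy (tr P) \<and> le_LOC (tr P) (tr (L_SIG_box :: ('a,'b,'b,'b) strat))"
    unfolding L_SIG_class_def le_LOC_tr is_strategy_tr by simp
  also have "\<dots> \<longleftrightarrow> tr P \<in> R_SIG_class" unfolding box_tr R_SIG_class_def by simp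
  also have "\<dots> \<longleftrightarrow> is_strategy P \<and> (\<forall>b y a a'. (\<Sum>x\<in>UNIV. P a b x y) = (\<Sum>x\<in>UNIV. P a' b x y))"
    unfolding R_class_iff is_strategy_tr by (simp add: tr_def)
  finally show ?thesis .
qed

theorem mainTheorem5:
  shows "(R_SIG_class \<inter> L_SIG_class :: ('a::finite,'b::finite,'x::finite,'y::finite) strat set)
         = no_signalling"
  unfolding no_signalling_def by (auto simp: R_class_iff L_class_iff)

end
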